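(* Let $P\in\mathbb{R}^{p\times m}$, $Y_d\in\mathbb{R}^p$, and consider the plant $Y_k=PU_k+N_k$ with tracking error $E_k=Y_d-Y_k$, so that $E_{k+1}=E_k+P\bar U_k+D_k$ with $\bar U_k=-\Delta U_k$, $D_k=-\Delta N_k$. Let $K\in\mathbb{R}^{m\times p}$ and apply the $k$-state feedback $\bar U_k=-KE_k$ for all $k\in\mathbb{Z}_+$ (equivalently, the updating law $U_{k+1}=U_k+KE_k$). Then the resulting closed-loop system is robustly $k$-stable if and only if $\rho(I_p-PK)<1$.
   Context: Notation: $\mathbb{Z}_+=\{0,1,2,\dots\}$. For a sequence $(f_k)_{k\in\mathbb{Z}_+}$, $\Delta f_k=f_{k+1}-f_k$ and $\Delta^2 f_k=\Delta(\Delta f_k)$. $\|\cdot\|$ is a fixed vector norm, $\rho(\cdot)$ the spectral radius. In the plant, $U_k\in\mathbb{R}^m$ is the input, $Y_k\in\mathbb{R}^p$ the output, and $(N_k)_{k\in\mathbb{Z}_+}\subset\mathbb{R}^p$ an unknown bounded (iteration-varying) uncertainty sequence. Define $\beta_{\Delta N}=\sup_{k}\|\Delta N_k\|$ and $\beta^{ess}_{\Delta N}=\limsup_{k\to\infty}\|\Delta N_k\|$. A closed-loop system formed by this plant and an updating law for $U_k$ is called robustly $k$-stable if there exist class-$\mathcal{K}_\infty$ functions $\chi_1,\chi_2$ and a class-$\mathcal{KL}$ function $\zeta$ such that for every bounded initial condition $E_0$ (i.e. every initial input $U_0$) and every bounded uncertainty $(N_k)$ there is a finite bound $\beta_0\ge0$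 (generally depending on the initial condition) with (boundedness) $\|E_k\|\le\chi_1(\beta_{\Delta N})+\zeta(\beta_0,k)$ for all $k\in\mathbb{Z}_+$, and (attractiveness) $\limsup_{k\to\infty}\|E_k\|\le\chi_2(\beta^{ess}_{\Delta N})$. *)

theory Defs
  imports "HOL-Analysis.Analysis"
begin

text \<open>Comparison functions (domain [0, infinity)).\<close>
definition class_K :: "(real \<Rightarrow> real) \<Rightarrow> bool" where
  "class_K f \<longleftrightarrow> continuous_on {0..} f \<and> f 0 = 0 \<and> strict_mono_on {0..} f"

definition class_Kinf :: "(real \<Rightarrow> real) \<Rightarrow> bool" where
  "class_Kinf f \<longleftrightarrow> class_K f \<and> filterlim f at_top at_top"

definition class_KL :: "(real \<Rightarrow> nat \<Rightarrow> real) \<Rightarrow> bool" where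
  "class_KL z \<longleftrightarrow> (\<forall>k. class_K (\<lambda>r. z r k)) \<and>
     (\<forall>r\<ge>0. antimono (\<lambda>k. z r k) \<and> (\<lambda>k. z r k) \<longlonglongrightarrow> 0)"

text \<open>Spectral radius of a real square matrix: largest modulus of its (complex) eigenvalues.\<close>
definition cmat :: "real^'n^'n \<Rightarrow> complex^'n^'n" where
  "cmat A = (\<chi> i j. complex_of_real (A $ i $ j))"

definition spectral_radius :: "real^'n^'n \<Rightarrow> real" where
  "spectral_radius A =
     Sup {cmod l | l. \<exists>v::complex^'n. v \<noteq> 0 \<and> cmat A *v v = l *s v}"

text \<open>Closed loop: input sequence generated by U_{k+1} = U_k + K E_k, with
  E_k = Yd - Y_k, Y_k = P U_k + N_k.\<close>
fun ilc_input :: "real^'m^'p \<Rightarrow> real^'p^'m \<Rightarrow> real^'p \<Rightarrow> (nat \<Rightarrow> real^'p) \<Rightarrow> real^'m \<Rightarrow> nat \<Rightarrow> real^'m" where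
  "ilc_input P K Yd N U0 0 = U0"
| "ilc_input P K Yd N U0 (Suc k) =
     ilc_input P K Yd N U0 k + K *v (Yd - (P *v ilc_input P K Yd N U0 k + N k))"

definition ilc_error :: "real^'m^'p \<Rightarrow> real^'p^'m \<Rightarrow> real^'p \<Rightarrow> (nat \<Rightarrow> real^'p) \<Rightarrow> real^'m \<Rightarrow> nat \<Rightarrow> real^'p" where
  "ilc_error P K Yd N U0 k = Yd - (P *v ilc_input P K Yd N U0 k + N k)"

definition beta_DN :: "(nat \<Rightarrow> 'a::real_normed_vector) \<Rightarrow> real" where
  "beta_DN N = (SUP k. norm (N (Suc k) - N k))"

definition beta_DN_ess :: "(nat \<Rightarrow> 'a::real_normed_vector) \<Rightarrow> real" where
  "beta_DN_ess N = real_of_ereal (limsup (\<lambda>k. ereal (norm (N (Suc k) - N k))))"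

definition robustly_k_stable :: "real^'m^'p \<Rightarrow> real^'p^'m \<Rightarrow> real^'p \<Rightarrow> bool" where
  "robustly_k_stable P K Yd \<longleftrightarrow>
    (\<exists>chi1 chi2 zeta. class_Kinf chi1 \<and> class_Kinf chi2 \<and> class_KL zeta \<and>
      (\<forall>U0 N. bounded (range N) \<longrightarrow>
         (\<exists>beta0\<ge>0.
            (\<forall>k. norm (ilc_error P K Yd N U0 k) \<le> chi1 (beta_DN N) + zeta beta0 k) \<and>
            limsup (\<lambda>k. ereal (norm (ilc_error P K Yd N U0 k))) \<le> ereal (chi2 (beta_DN_ess N)))))"

end

theory Submission
  imports "Jordan_Normal_Form.Spectral_Radius" Defs
begin


definition idx :: "'n::finite \<Rightarrow> nat" where
  "idx = (SOME h. bij_betw h (UNIV::'n set) {0..<CARD('n)})"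

lemma idx_bij: "bij_betw (idx :: 'n::finite \<Rightarrow> nat) UNIV {0..<CARD('n)}"
proof -
  obtain h where "bij_betw h (UNIV::'n set) {0..<CARD('n)}"
    using ex_bij_betw_finite_nat[of "UNIV::'n set"] by auto
  then show ?thesis unfolding idx_def by (metis someI)
qed

definition ix :: "nat \<Rightarrow> 'n::finite" where "ix = inv_into UNIV idx"

lemma ix_bij: "bij_betw (ix :: nat \<Rightarrow> 'n::finite) {0..<CARD('n)} UNIV"
  unfolding ix_def by (rule bij_betw_inv_into[OF idx_bij])

lemma idx_ix: "i < CARD('n::finite) \<Longrightarrow> idx (ix i :: 'n) = i"
  unfolding ix_def using idx_bij[where 'n='n]
  by (meson atLeastLessThan_iff bij_betw_inv_into_right zero_le)

lemma ix_idx: "ix (idx (a::'n::finite)) = a"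
  unfolding ix_def using idx_bij[where 'n='n]
  by (meson bij_betw_imp_inj_on inv_into_f_f UNIV_I)

lemma idx_lt: "idx (a::'n::finite) < CARD('n)"
  using idx_bij[where 'n='n] by (auto dest: bij_betwE)

definition to_m :: "complex^'n^'n \<Rightarrow> complex mat" where
  "to_m M = Matrix.mat CARD('n::finite) CARD('n) (\<lambda>(i,j). vec_nth (vec_nth M (ix i)) (ix j))"

definition to_v :: "complex^'n \<Rightarrow> complex Matrix.vec" where
  "to_v v = Matrix.vec CARD('n::finite) (\<lambda>i. vec_nth v (ix i))"

definition of_v :: "complex Matrix.vec \<Rightarrow> complex^'n::finite" where
  "of_v w = (\<chi> a. vec_index w (idx a))"

lemma to_m_carrier: "to_m (M::complex^'n::finite^'n) \<in> carrier_mat CARD('n) CARD('n)"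
  unfolding to_m_def by auto

lemma to_v_carrier: "to_v (v::complex^'n::finite) \<in> carrier_vec CARD('n)"
  unfolding to_v_def by auto

lemma to_v_of_v: "w \<in> carrier_vec CARD('n::finite) \<Longrightarrow> to_v (of_v w :: complex^'n) = w"
  unfolding to_v_def of_v_def by (auto simp: idx_ix)

lemma to_v_eq_iff: "to_v (v::complex^'n::finite) = to_v w \<longleftrightarrow> v = w"
proof
  assume h: "to_v v = to_v w"
  show "v = w"
  proof (rule vec_eq_iff[THEN iffD2], rule allI)
    fix a :: 'n
    have "vec_index (to_v v) (idx a) = vec_index (to_v w) (idx a)" using h by simp
    thus "vec_nth v a = vec_nth w a" unfolding to_v_def using idx_lt[of a] by (simp add: ix_idx)
  qed
qed simp

lemma to_v_zero: "to_v (0::complex^'n::finite) = 0\<^sub>v CARD('n)"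
  unfolding to_v_def by auto

lemma to_v_smult: "to_v (l *s (v::complex^'n::finite)) = l \<cdot>\<^sub>v to_v v"
  unfolding to_v_def by auto

lemma to_m_mult: "to_m M *\<^sub>v to_v v = to_v (M *v (v::complex^'n::finite))"
proof (rule eq_vecI)
  show "dim_vec (to_m M *\<^sub>v to_v v) = dim_vec (to_v (M *v v))"
    unfolding to_m_def to_v_def by simp
  fix i assume "i < dim_vec (to_v (M *v v))"
  hence i: "i < CARD('n)" unfolding to_v_def by simp
  have "vec_index (to_m M *\<^sub>v to_v v) i = (\<Sum>j = 0..<CARD('n). vec_nth (vec_nth M (ix i)) (ix j) * vec_nth v (ix j))"
    using i unfolding to_m_def to_v_def by (simp add: scalar_prod_def)
  also have "\<dots> = (\<Sum>a\<in>UNIV. vec_nth (vec_nth M (ix i)) a * vec_nth v a)"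
    using sum.reindex_bij_betw[OF ix_bij, of "\<lambda>a. vec_nth (vec_nth M (ix i)) a * vec_nth v a"]
    by simp
  also have "\<dots> = vec_index (to_v (M *v v)) i"
    using i unfolding to_v_def by (simp add: matrix_vector_mult_def)
  finally show "vec_index (to_m M *\<^sub>v to_v v) i = vec_index (to_v (M *v v)) i" .
qed

lemma eigen_iff: "eigenvalue (to_m (M::complex^'n::finite^'n)) l \<longleftrightarrow> (\<exists>v. v \<noteq> 0 \<and> M *v v = l *s v)"
proof
  assume "eigenvalue (to_m M) l"
  then obtain w where w: "w \<in> carrier_vec CARD('n)" "w \<noteq> 0\<^sub>v CARD('n)" "to_m M *\<^sub>v w = l \<cdot>\<^sub>v w"
    unfolding eigenvalue_def eigenvector_def using to_m_carrier[of M] by auto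
  define v where "v = (of_v w :: complex^'n)"
  have tw: "to_v v = w" unfolding v_def using to_v_of_v[OF w(1)] .
  have "v \<noteq> 0" using w(2) tw to_v_zero by metis
  moreover have "to_v (M *v v) = to_v (l *s v)"
    using w(3) tw by (simp add: to_m_mult[symmetric] to_v_smult)
  ultimately show "\<exists>v. v \<noteq> 0 \<and> M *v v = l *s v" using to_v_eq_iff by blast
next
  assume "\<exists>v. v \<noteq> 0 \<and> M *v v = l *s v"
  then obtain v where v: "v \<noteq> 0" "M *v v = l *s v" by auto
  have "to_v v \<noteq> 0\<^sub>v CARD('n)" using v(1) to_v_zero to_v_eq_iff by metis
  moreover have "to_m M *\<^sub>v to_v v = l \<cdot>\<^sub>v to_v v" by (simp add: to_m_mult v(2) to_v_smult)
  ultimately show "eigenvalue (to_m M) l"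
    unfolding eigenvalue_def eigenvector_def using to_m_carrier[of M] to_v_carrier[of v] by auto
qed

lemma sr_eq: "Defs.spectral_radius (A::real^'n::finite^'n) = Spectral_Radius.spectral_radius (to_m (cmat A))"
proof -
  have S: "{cmod l | l. \<exists>v::complex^'n. v \<noteq> 0 \<and> cmat A *v v = l *s v} = norm ` spectrum (to_m (cmat A))"
    unfolding spectrum_def using eigen_iff[of "cmat A"] by auto
  have fin: "finite (spectrum (to_m (cmat A)))" using card_finite_spectrum(1)[OF to_m_carrier] .
  have ne: "spectrum (to_m (cmat A)) \<noteq> {}" by (rule spectrum_non_empty[OF to_m_carrier]) simp
  show ?thesis unfolding Defs.spectral_radius_def Spectral_Radius.spectral_radius_def S
    using fin ne by (simp add: cSup_eq_Max)
qed



lemma err_rec: "ilc_error P K Yd N U0 (Suc k) =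
   (mat 1 - P ** K) *v ilc_error P K Yd N U0 k - (N (Suc k) - N k)"
proof -
  define u where "u = ilc_input P K Yd N U0 k"
  define e where "e = Yd - (P *v u + N k)"
  have 1: "ilc_error P K Yd N U0 (Suc k) = Yd - (P *v (u + K *v e) + N (Suc k))"
    unfolding ilc_error_def u_def e_def by simp
  have 2: "(mat 1 - P ** K) *v e = e - P *v (K *v e)"
    by (simp add: matrix_vector_mult_diff_rdistrib matrix_vector_mul_assoc)
  have 3: "ilc_error P K Yd N U0 k = e" unfolding ilc_error_def u_def e_def ..
  have 4: "Yd = e + P *v u + N k" by (simp add: e_def)
  show ?thesis unfolding 1 2 3 by (subst 4) (simp add: matrix_vector_right_distrib algebra_simps)
qed

definition cpl :: "real^'n \<Rightarrow> real^'n \<Rightarrow> complex^'n" where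
  "cpl a b = (\<chi> i. complex_of_real (a $ i) + \<i> * complex_of_real (b $ i))"

lemma cmat_cpl: "cmat A *v cpl a b = cpl (A *v a) (A *v b)"
  unfolding cpl_def cmat_def matrix_vector_mult_def
  by (simp add: vec_eq_iff complex_eq_iff Re_sum Im_sum sum_distrib_left)

lemma cmat_cpl_pow: "((\<lambda>v. cmat A *v v) ^^ k) (cpl a b) = cpl (((\<lambda>x. A *v x) ^^ k) a) (((\<lambda>x. A *v x) ^^ k) b)"
  by (induction k) (simp_all add: cmat_cpl)

lemma cmul_smult: "(M::complex^'n^'m) *v (c *s v) = c *s (M *v v)"
  unfolding matrix_vector_mult_def
  by (simp add: vec_eq_iff sum_distrib_left algebra_simps)

lemma eig_pow: "(M::complex^'n^'n) *v v = l *s v \<Longrightarrow> ((\<lambda>v. M *v v) ^^ k) v = l ^ k *s v"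
  by (induction k) (simp_all add: cmul_smult)

lemma stable_decay:
  assumes "robustly_k_stable P K Yd"
  shows "(\<lambda>k. ((\<lambda>x. (mat 1 - P ** K) *v x) ^^ k) z) \<longlonglongrightarrow> 0"
proof -
  let ?A = "mat 1 - P ** K"
  let ?f = "\<lambda>x. ?A *v x"
  from assms obtain chi1 chi2 zeta where c: "class_Kinf chi1" "class_KL zeta" and
    st: "\<forall>U0 N. bounded (range N) \<longrightarrow>
         (\<exists>beta0\<ge>0. (\<forall>k. norm (ilc_error P K Yd N U0 k) \<le> chi1 (beta_DN N) + zeta beta0 k))"
    unfolding robustly_k_stable_def by blast
  define N :: "nat \<Rightarrow> real^_" where "N = (\<lambda>_. Yd - z)"
  have "bounded (range N)" unfolding N_def by (simp add: image_constant_conv)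
  with st obtain b0 where b0: "b0 \<ge> 0" "\<forall>k. norm (ilc_error P K Yd N 0 k) \<le> chi1 (beta_DN N) + zeta b0 k"
    by blast
  have bd: "beta_DN N = 0" unfolding beta_DN_def N_def by simp
  have c10: "chi1 0 = 0" using c(1) unfolding class_Kinf_def class_K_def by simp
  have E: "ilc_error P K Yd N 0 k = (?f ^^ k) z" for k
  proof (induction k)
    case 0 then show ?case unfolding ilc_error_def N_def by simp
  next
    case (Suc k) then show ?case by (simp add: err_rec N_def)
  qed
  have zt: "(\<lambda>k. zeta b0 k) \<longlonglongrightarrow> 0" using c(2) b0(1) unfolding class_KL_def by blast
  show ?thesis
    by (rule Lim_null_comparison[OF _ zt]) (use b0(2) E bd c10 in auto)
qed

lemma stable_imp:
  assumes "robustly_k_stable P K Yd"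
  shows "Spectral_Radius.spectral_radius (to_m (cmat (mat 1 - P ** K))) < 1"
proof (rule ccontr)
  let ?A = "mat 1 - P ** K"
  let ?f = "\<lambda>x. ?A *v x"
  assume "\<not> ?thesis"
  hence ge: "Spectral_Radius.spectral_radius (to_m (cmat ?A)) \<ge> 1" by simp
  from spectral_radius_mem_max(1)[OF to_m_carrier] obtain l where
    l: "l \<in> spectrum (to_m (cmat ?A))" "Spectral_Radius.spectral_radius (to_m (cmat ?A)) = cmod l"
    by fastforce
  from l(1) obtain v where v: "v \<noteq> 0" "cmat ?A *v v = l *s v"
    unfolding spectrum_def using eigen_iff by blast
  from v(1) obtain i where i: "v $ i \<noteq> 0" by (auto simp: vec_eq_iff)
  define x where "x = (\<chi> j. Re (v $ j))"
  define y where "y = (\<chi> j. Im (v $ j))"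
  have vc: "v = cpl x y" unfolding cpl_def x_def y_def by (simp add: vec_eq_iff complex_eq_iff)
  have lim: "(\<lambda>k. norm ((?f ^^ k) x) + norm ((?f ^^ k) y)) \<longlonglongrightarrow> 0"
    using tendsto_add[OF tendsto_norm_zero[OF stable_decay[OF assms, of x]]
        tendsto_norm_zero[OF stable_decay[OF assms, of y]]] by simp
  have "cmod (v $ i) \<le> norm ((?f ^^ k) x) + norm ((?f ^^ k) y)" for k
  proof -
    have "l ^ k * v $ i = ((\<lambda>v. cmat ?A *v v) ^^ k) v $ i" using eig_pow[OF v(2), of k] by simp
    also have "\<dots> = complex_of_real ((?f ^^ k) x $ i) + \<i> * complex_of_real ((?f ^^ k) y $ i)"
      unfolding vc cmat_cpl_pow by (simp add: cpl_def)
    finally have eq: "l ^ k * v $ i = complex_of_real ((?f ^^ k) x $ i) + \<i> * complex_of_real ((?f ^^ k) y $ i)" .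
    have "cmod (v $ i) \<le> cmod l ^ k * cmod (v $ i)"
      using ge l(2) by (simp add: one_le_power mult_le_cancel_right1)
    also have "\<dots> = cmod (l ^ k * v $ i)" by (simp add: norm_mult norm_power)
    also have "\<dots> \<le> \<bar>(?f ^^ k) x $ i\<bar> + \<bar>(?f ^^ k) y $ i\<bar>"
      unfolding eq by (rule order_trans[OF norm_triangle_ineq]) (simp add: norm_mult)
    also have "\<dots> \<le> norm ((?f ^^ k) x) + norm ((?f ^^ k) y)"
      by (intro add_mono component_le_norm_cart)
    finally show ?thesis .
  qed
  hence "cmod (v $ i) \<le> 0" by (intro LIMSEQ_le_const[OF lim]) auto
  with i show False by simp
qed



lemma cmat_scale: "cmat (scaleR (s::real) (A::real^'n^'n)) *v v = complex_of_real s *s (cmat A *v v)"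
  unfolding cmat_def matrix_vector_mult_def
  by (simp add: vec_eq_iff sum_distrib_left algebra_simps)

lemma rmul_scale: "scaleR s (A::real^'n^'m) *v y = scaleR s (A *v y)"
  unfolding matrix_vector_mult_def
  by (simp add: vec_eq_iff sum_distrib_left algebra_simps)

lemma rmul_scale2: "(A::real^'n^'m) *v (scaleR s y) = scaleR s (A *v y)"
  unfolding matrix_vector_mult_def
  by (simp add: vec_eq_iff sum_distrib_left algebra_simps)

lemma powm: "to_m M ^\<^sub>m k *\<^sub>v to_v v = to_v (((\<lambda>v. (M::complex^'n::finite^'n) *v v) ^^ k) v)"
proof (induction k arbitrary: v)
  case 0
  then show ?case using to_v_carrier[of v] by (simp add: to_m_def)
next
  case (Suc k)
  have "to_m M ^\<^sub>m Suc k *\<^sub>v to_v v = to_m M ^\<^sub>m k *\<^sub>v (to_m M *\<^sub>v to_v v)"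
    by (simp add: assoc_mult_mat_vec[OF pow_carrier_mat[OF to_m_carrier] to_m_carrier to_v_carrier])
  also have "\<dots> = to_v (((\<lambda>v. M *v v) ^^ k) (M *v v))" by (simp add: to_m_mult Suc)
  finally show ?case by (simp add: funpow_Suc_right del: funpow.simps)
qed

lemma rpow_zero: "((\<lambda>x. (A::real^'n^'n) *v x) ^^ k) 0 = 0"
  by (induction k) simp_all

lemma decay:
  fixes A :: "real^'n::finite^'n"
  assumes sr: "Spectral_Radius.spectral_radius (to_m (cmat A)) < 1"
  shows "\<exists>c r. 0 < c \<and> 0 < r \<and> r < 1 \<and> (\<forall>k x. norm (((\<lambda>x. A *v x) ^^ k) x) \<le> c * r ^ k * norm x)"
proof -
  let ?rho = "Spectral_Radius.spectral_radius (to_m (cmat A))"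
  have rho0: "?rho \<ge> 0" using spectral_radius_mem_max(1)[OF to_m_carrier, of "cmat A"] by auto
  define r where "r = (?rho + 1) / 2"
  have r: "0 < r" "r < 1" "?rho < r" using rho0 sr unfolding r_def by auto
  define A' where "A' = scaleR (1/r) A"
  define B where "B = to_m (cmat A')"
  have B: "B \<in> carrier_mat CARD('n) CARD('n)" unfolding B_def by (rule to_m_carrier)
  have srB: "Spectral_Radius.spectral_radius B < 1"
  proof -
    have fin: "finite (spectrum B)" using card_finite_spectrum(1)[OF B] .
    have ne: "spectrum B \<noteq> {}" by (rule spectrum_non_empty[OF B]) simp
    have "cmod l < 1" if l: "l \<in> spectrum B" for l
    proof -
      from l obtain v where v: "v \<noteq> 0" "cmat A' *v v = l *s v"
        unfolding spectrum_def B_def using eigen_iff by blast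
      have "cmat A *v v = complex_of_real r *s (cmat A' *v v)"
        using r(1) unfolding A'_def cmat_scale by (simp add: vector_smult_assoc)
      also have "\<dots> = (complex_of_real r * l) *s v" by (simp add: v(2) vector_smult_assoc)
      finally have "eigenvalue (to_m (cmat A)) (complex_of_real r * l)"
        using eigen_iff v(1) by blast
      hence "cmod (complex_of_real r * l) \<le> ?rho"
        by (intro spectral_radius_mem_max(2)[OF to_m_carrier]) (auto simp: spectrum_def)
      hence "r * cmod l \<le> ?rho" using r(1) by (simp add: norm_mult)
      hence "r * cmod l < r * 1" using r(3) by linarith
      thus ?thesis using r(1) by (simp only: mult_less_cancel_left_pos)
    qed
    thus ?thesis unfolding Spectral_Radius.spectral_radius_def using fin ne by (simp add: Max_less_iff)
  qed
  from spectral_radius_jnf_norm_bound_less_1_upper_triangular[OF B srB]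
  obtain c0 where c0: "\<And>k. norm_bound (B ^\<^sub>m k) c0" by blast
  let ?n = "CARD('n)"
  have c00: "c0 \<ge> 0"
  proof -
    have n0: "0 < ?n" by simp
    from c0[of 0] have h: "\<And>i j. i < dim_row (B ^\<^sub>m 0) \<Longrightarrow> j < dim_col (B ^\<^sub>m 0) \<Longrightarrow> norm ((B ^\<^sub>m 0) $$ (i, j)) \<le> c0"
      unfolding norm_bound_def by blast
    have "norm ((B ^\<^sub>m 0) $$ (0, 0)) \<le> c0"
      by (rule h) (use n0 B in auto)
    thus ?thesis using norm_ge_zero order_trans by blast
  qed
  define c where "c = real ?n * real ?n * c0 + 1"
  have cpos: "c > 0" unfolding c_def using c00 by (intro add_nonneg_pos mult_nonneg_nonneg) auto
  have wb: "norm (((\<lambda>x. A' *v x) ^^ k) x) \<le> real ?n * real ?n * c0 * norm x" for k x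
  proof -
    let ?w = "((\<lambda>x. A' *v x) ^^ k) x"
    have comp: "\<bar>?w $ a\<bar> \<le> real ?n * c0 * norm x" for a
    proof -
      have "cpl ?w 0 = ((\<lambda>v. cmat A' *v v) ^^ k) (cpl x 0)"
        by (simp add: cmat_cpl_pow rpow_zero)
      hence "to_v (cpl ?w 0) = B ^\<^sub>m k *\<^sub>v to_v (cpl x 0)" unfolding B_def by (simp add: powm)
      hence "vec_index (to_v (cpl ?w 0)) (idx a) = vec_index (B ^\<^sub>m k *\<^sub>v to_v (cpl x 0)) (idx a)" by simp
      hence eq: "complex_of_real (?w $ a) = (\<Sum>j = 0..<?n. (B ^\<^sub>m k) $$ (idx a, j) * complex_of_real (x $ ix j))"
        using idx_lt[of a] carrier_matD[OF pow_carrier_mat[OF B, of k]]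
        by (simp add: to_v_def cpl_def ix_idx scalar_prod_def mult_mat_vec_def row_def)
      have "\<bar>?w $ a\<bar> = cmod (complex_of_real (?w $ a))" by simp
      also have "\<dots> \<le> (\<Sum>j = 0..<?n. cmod ((B ^\<^sub>m k) $$ (idx a, j) * complex_of_real (x $ ix j)))"
        unfolding eq by (rule norm_sum)
      also have "\<dots> \<le> (\<Sum>j = 0..<?n. c0 * norm x)"
      proof (rule sum_mono)
        fix j assume j: "j \<in> {0..<?n}"
        have "cmod ((B ^\<^sub>m k) $$ (idx a, j)) \<le> c0"
          using c0[of k] j idx_lt[of a] carrier_matD[OF B] unfolding norm_bound_def by auto
        moreover have "\<bar>x $ ix j\<bar> \<le> norm x" by (rule component_le_norm_cart)
        ultimately show "cmod ((B ^\<^sub>m k) $$ (idx a, j) * complex_of_real (x $ ix j)) \<le> c0 * norm x"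
          by (simp add: norm_mult mult_mono' c00)
      qed
      also have "\<dots> = real ?n * c0 * norm x" by simp
      finally show ?thesis .
    qed
    have "norm ?w \<le> (\<Sum>a\<in>UNIV. \<bar>?w $ a\<bar>)" by (rule norm_le_l1_cart)
    also have "\<dots> \<le> (\<Sum>a\<in>(UNIV::'n set). real ?n * c0 * norm x)" by (rule sum_mono) (rule comp)
    also have "\<dots> = real ?n * real ?n * c0 * norm x" by simp
    finally show ?thesis .
  qed
  have scl: "((\<lambda>x. A *v x) ^^ k) x = scaleR (r ^ k) (((\<lambda>x. A' *v x) ^^ k) x)" for k x
  proof (induction k)
    case 0 then show ?case by simp
  next
    case (Suc k)
    have AA: "A = scaleR r A'" unfolding A'_def using r(1) by simp
    show ?case using Suc by (simp add: rmul_scale2) (subst AA, simp add: rmul_scale)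
  qed
  have "norm (((\<lambda>x. A *v x) ^^ k) x) \<le> c * r ^ k * norm x" for k x
  proof -
    have "norm (((\<lambda>x. A *v x) ^^ k) x) = r ^ k * norm (((\<lambda>x. A' *v x) ^^ k) x)"
      using r(1) by (simp add: scl)
    also have "\<dots> \<le> r ^ k * (real ?n * real ?n * c0 * norm x)"
      using r(1) wb by (simp add: mult_left_mono)
    also have "\<dots> \<le> r ^ k * (c * norm x)"
      using r(1) unfolding c_def by (intro mult_left_mono) (auto simp: algebra_simps)
    finally show ?thesis by (simp add: algebra_simps)
  qed
  thus ?thesis using cpos r by blast
qed



lemma gen_bound:
  fixes A :: "real^'n^'n"
  assumes G: "\<And>k x. norm (((\<lambda>x. A *v x) ^^ k) x) \<le> c * r ^ k * norm x"
    and c: "c > 0" and r: "0 < r" "r < 1"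
    and rec: "\<And>k. e (Suc k) = A *v e k - d k" and dB: "\<And>j. norm (d j) \<le> B"
  shows "norm (e k) \<le> c * r ^ k * norm (e 0) + c / (1 - r) * B"
proof -
  let ?f = "\<lambda>x. A *v x"
  have lin: "linear ?f" by (rule matrix_vector_mul_linear)
  have form: "e k = (?f ^^ k) (e 0) - (\<Sum>j<k. (?f ^^ (k - Suc j)) (d j))" for k
  proof (induction k)
    case 0 then show ?case by simp
  next
    case (Suc k)
    have "e (Suc k) = ?f (e k) - d k" by (rule rec)
    also have "\<dots> = ?f ((?f ^^ k) (e 0)) - (\<Sum>j<k. ?f ((?f ^^ (k - Suc j)) (d j))) - d k"
      unfolding Suc by (simp add: linear_diff[OF lin] linear_sum[OF lin])
    also have "(\<Sum>j<k. ?f ((?f ^^ (k - Suc j)) (d j))) = (\<Sum>j<k. (?f ^^ (Suc k - Suc j)) (d j))"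
    proof (rule sum.cong)
      fix j assume "j \<in> {..<k}"
      hence "Suc k - Suc j = Suc (k - Suc j)" by auto
      thus "?f ((?f ^^ (k - Suc j)) (d j)) = (?f ^^ (Suc k - Suc j)) (d j)" by simp
    qed simp
    finally show ?case by (simp add: algebra_simps)
  qed
  have B0: "B \<ge> 0" using dB[of 0] norm_ge_zero order_trans by blast
  have "norm (e k) \<le> norm ((?f ^^ k) (e 0)) + norm (\<Sum>j<k. (?f ^^ (k - Suc j)) (d j))"
    unfolding form[of k] by (rule norm_triangle_ineq4)
  also have "\<dots> \<le> c * r ^ k * norm (e 0) + (\<Sum>j<k. c * r ^ (k - Suc j) * B)"
  proof (rule add_mono[OF G])
    have "norm (\<Sum>j<k. (?f ^^ (k - Suc j)) (d j)) \<le> (\<Sum>j<k. norm ((?f ^^ (k - Suc j)) (d j)))"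
      by (rule norm_sum)
    also have "\<dots> \<le> (\<Sum>j<k. c * r ^ (k - Suc j) * B)"
    proof (rule sum_mono)
      fix j
      have "norm ((?f ^^ (k - Suc j)) (d j)) \<le> c * r ^ (k - Suc j) * norm (d j)" by (rule G)
      also have "\<dots> \<le> c * r ^ (k - Suc j) * B" using c r dB[of j] by (intro mult_left_mono) auto
      finally show "norm ((?f ^^ (k - Suc j)) (d j)) \<le> c * r ^ (k - Suc j) * B" .
    qed
    finally show "norm (\<Sum>j<k. (?f ^^ (k - Suc j)) (d j)) \<le> (\<Sum>j<k. c * r ^ (k - Suc j) * B)" .
  qed
  also have "(\<Sum>j<k. c * r ^ (k - Suc j) * B) = c * B * (\<Sum>j<k. r ^ j)"
    using sum.nat_diff_reindex[of "\<lambda>i. c * r ^ i * B" k]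
    by (simp add: sum_distrib_left sum_distrib_right algebra_simps)
  also have "(\<Sum>j<k. r ^ j) = (1 - r ^ k) / (1 - r)" using r by (simp add: sum_gp_strict)
  also have "c * B * ((1 - r ^ k) / (1 - r)) \<le> c / (1 - r) * B"
  proof -
    have "(1 - r ^ k) / (1 - r) \<le> 1 / (1 - r)" using r by (intro divide_right_mono) auto
    hence "c * B * ((1 - r ^ k) / (1 - r)) \<le> c * B * (1 / (1 - r))"
      using c B0 by (intro mult_left_mono) auto
    thus ?thesis by simp
  qed
  finally show ?thesis by simp
qed

lemma lin_K: "a > 0 \<Longrightarrow> class_K (\<lambda>s. a * s)"
  unfolding class_K_def strict_mono_on_def by (auto intro!: continuous_intros)

lemma lin_Kinf: "a > 0 \<Longrightarrow> class_Kinf (\<lambda>s. a * s)"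
  unfolding class_Kinf_def using lin_K
  by (auto intro!: filterlim_tendsto_pos_mult_at_top[OF tendsto_const _ filterlim_ident])

lemma stable_of_decay:
  fixes P :: "real^'m^'p" and K :: "real^'p^'m" and Yd :: "real^'p"
  assumes G: "\<And>k x. norm (((\<lambda>x. (mat 1 - P ** K) *v x) ^^ k) x) \<le> c * r ^ k * norm x"
    and c: "c > 0" and r: "0 < r" "r < 1"
  shows "robustly_k_stable P K Yd"
proof -
  define C where "C = c / (1 - r)"
  have C: "C > 0" unfolding C_def using c r by simp
  define zeta where "zeta = (\<lambda>s (k::nat). c * r ^ k * s)"
  have KL: "class_KL zeta"
    unfolding class_KL_def
  proof (intro conjI allI impI)
    fix k show "class_K (\<lambda>s. zeta s k)" unfolding zeta_def using lin_K[of "c * r ^ k"] c r by simp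
  next
    fix s :: real assume s: "s \<ge> 0"
    show "antimono (\<lambda>k. zeta s k)" unfolding antimono_def zeta_def
    proof (intro allI impI)
      fix x y :: nat assume "x \<le> y"
      hence "r ^ y \<le> r ^ x" using r by (intro power_decreasing) auto
      thus "c * r ^ y * s \<le> c * r ^ x * s" using c s by (intro mult_right_mono mult_left_mono) auto
    qed
    show "(\<lambda>k. zeta s k) \<longlonglongrightarrow> 0" unfolding zeta_def
      using tendsto_mult[OF tendsto_mult[OF tendsto_const LIMSEQ_power_zero[of r]] tendsto_const, of c s] r
      by simp
  qed
  show ?thesis unfolding robustly_k_stable_def
  proof (rule exI[of _ "\<lambda>s. C * s"], rule exI[of _ "\<lambda>s. C * s"], rule exI[of _ zeta],
      intro conjI allI impI)
    show "class_Kinf (\<lambda>s. C * s)" by (rule lin_Kinf[OF C])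
    show "class_Kinf (\<lambda>s. C * s)" by (rule lin_Kinf[OF C])
    show "class_KL zeta" by (rule KL)
    fix U0 and N :: "nat \<Rightarrow> real^'p"
    assume bN: "bounded (range N)"
    define E where "E = ilc_error P K Yd N U0"
    define D where "D = (\<lambda>k. N (Suc k) - N k)"
    have rec: "\<And>k. E (Suc k) = (mat 1 - P ** K) *v E k - D k" unfolding E_def D_def by (rule err_rec)
    from bN obtain M where M: "\<And>k. norm (N k) \<le> M" unfolding bounded_iff by auto
    have DM: "norm (D k) \<le> 2 * M" for k
      unfolding D_def using norm_triangle_ineq4[of "N (Suc k)" "N k"] M[of k] M[of "Suc k"] by simp
    have bdd: "bdd_above (range (\<lambda>k. norm (D k)))" by (rule bdd_aboveI2[where M="2*M"]) (rule DM)
    have Dbeta: "norm (D k) \<le> beta_DN N" for k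
    proof -
      have "beta_DN N = (SUP k. norm (D k))" unfolding beta_DN_def D_def ..
      thus ?thesis using cSUP_upper[OF _ bdd, of k] by simp
    qed
    show "\<exists>beta0\<ge>0. (\<forall>k. norm (ilc_error P K Yd N U0 k) \<le> C * beta_DN N + zeta beta0 k) \<and>
            limsup (\<lambda>k. ereal (norm (ilc_error P K Yd N U0 k))) \<le> ereal (C * beta_DN_ess N)"
    proof (intro exI conjI allI)
      show "norm (E 0) \<ge> 0" by simp
      fix k
      show "norm (ilc_error P K Yd N U0 k) \<le> C * beta_DN N + zeta (norm (E 0)) k"
        using gen_bound[where e=E and d=D and B="beta_DN N" and k=k, OF G c r rec Dbeta] unfolding E_def zeta_def C_def by simp
    next
      define L where "L = limsup (\<lambda>k. ereal (norm (D k)))"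
      have L1: "L \<le> ereal (2 * M)" unfolding L_def by (rule Limsup_bounded) (use DM in simp)
      have L0: "0 \<le> L" unfolding L_def by (rule le_Limsup) auto
      define l where "l = real_of_ereal L"
      have Ll: "L = ereal l" unfolding l_def using L0 L1 by (cases L) auto
      have bess: "beta_DN_ess N = l" unfolding beta_DN_ess_def l_def L_def D_def ..
      have "limsup (\<lambda>k. ereal (norm (E k))) \<le> ereal (C * l) + ereal eps" if eps: "eps > 0" for eps
      proof -
        define dl where "dl = eps / (C + 1)"
        have dl: "dl > 0" unfolding dl_def using eps C by simp
        have "L < ereal (l + dl)" using Ll dl by simp
        hence "eventually (\<lambda>k. ereal (norm (D k)) < ereal (l + dl)) sequentially"
          unfolding L_def by (rule Limsup_lessD)
        then obtain m where m: "\<And>j. j \<ge> m \<Longrightarrow> norm (D j) < l + dl"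
          unfolding eventually_sequentially by auto
        have gb: "norm (E (m + k)) \<le> c * r ^ k * norm (E m) + C * (l + dl)" for k
          using gen_bound[OF G c r, of "\<lambda>k. E (m + k)" "\<lambda>k. D (m + k)" "l + dl" k] rec m
          unfolding C_def by (simp add: less_imp_le)
        have "(\<lambda>k. c * r ^ k * norm (E m)) \<longlonglongrightarrow> 0"
          using tendsto_mult[OF tendsto_mult[OF tendsto_const LIMSEQ_power_zero[of r]] tendsto_const, of c "norm (E m)"] r
          by simp
        from order_tendstoD(2)[OF this dl] obtain K0 where
          K0: "\<And>k. k \<ge> K0 \<Longrightarrow> c * r ^ k * norm (E m) < dl"
          unfolding eventually_sequentially by auto
        have "eventually (\<lambda>n. ereal (norm (E n)) \<le> ereal (C * l) + ereal eps) sequentially"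
          unfolding eventually_sequentially
        proof (intro exI allI impI)
          fix n assume n: "n \<ge> m + K0"
          have "norm (E n) = norm (E (m + (n - m)))" using n by simp
          also have "\<dots> \<le> c * r ^ (n - m) * norm (E m) + C * (l + dl)" by (rule gb)
          also have "\<dots> \<le> dl + C * (l + dl)" proof -
            have "K0 \<le> n - m" using n by simp
            from K0[OF this] show ?thesis by simp
          qed
          also have "\<dots> = C * l + eps"
          proof -
            have h1: "(C + 1) * dl = eps" unfolding dl_def using C by simp
            have h: "C * dl + dl = eps" using h1 by (simp add: distrib_right)
            show ?thesis unfolding distrib_left using h by linarith
          qed
          finally show "ereal (norm (E n)) \<le> ereal (C * l) + ereal eps" by simp
        qed
        thus ?thesis by (rule Limsup_bounded)
      qed
      hence "limsup (\<lambda>k. ereal (norm (E k))) \<le> ereal (C * l)" by (rule ereal_le_epsilon2)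
      thus "limsup (\<lambda>k. ereal (norm (ilc_error P K Yd N U0 k))) \<le> ereal (C * beta_DN_ess N)"
        unfolding bess E_def .
    qed
  qed
qed


theorem theorem1:
  fixes P :: "real^'m^'p" and K :: "real^'p^'m" and Yd :: "real^'p"
  shows "robustly_k_stable P K Yd \<longleftrightarrow> spectral_radius (mat 1 - P ** K) < 1"
proof
  assume "robustly_k_stable P K Yd"
  from stable_imp[OF this] show "Defs.spectral_radius (mat 1 - P ** K) < 1" by (simp add: sr_eq)
next
  assume "Defs.spectral_radius (mat 1 - P ** K) < 1"
  hence "Spectral_Radius.spectral_radius (to_m (cmat (mat 1 - P ** K))) < 1" by (simp add: sr_eq)
  from decay[OF this] obtain c r where cr: "0 < c" "0 < r" "r < 1"
    "\<forall>k x. norm (((\<lambda>x. (mat 1 - P ** K) *v x) ^^ k) x) \<le> c * r ^ k * norm x" by blast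
  show "robustly_k_stable P K Yd" by (rule stable_of_decay[OF _ cr(1-3)]) (use cr(4) in blast)
qed

end
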